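(* Let $\mathbf u\in\{0,1\}^{\mathbb N}$ and $\sigma\in\{L,M,R\}^*$ with $\inf(\mathbf u)\ge\inf(\sigma(1\overline0))$ and $\sup(\mathbf u)\le\sup(\sigma(0\overline1))$. Then either $\mathbf u$ has a suffix equal to $\sigma(\mathbf v)$ for some $\mathbf v\in\{0,1\}^{\mathbb N}$, or $\mathbf u$ has a suffix equal to $\sigma'(\overline0)$ for some $\sigma'\in\{L,M,R\}^*M$ such that $\sigma=\sigma'\tau$ for some $\tau\in\{L,M,R\}^*$.
   Context: Infinite words over $\{0,1\}$ are ordered lexicographically; $\overline{w}$ denotes infinite repetition of $w$. For $\mathbf u=u_1u_2\cdots\in\{0,1\}^{\mathbb N}$, $\sup(\mathbf u)$ and $\inf(\mathbf u)$ are the lexicographic supremum and infimum of $\{u_ku_{k+1}\cdots:k\ge1\}$. Substitutions (monoid morphisms on words, extended letterwise to infinite words): $L:0\mapsto0,1\mapsto01$; $M:0\mapsto01,1\mapsto10$; $R:0\mapsto01,1\mapsto1$. $\{L,M,R\}^*$ is the monoid they generate under composition (including the identity), and $\{L,M,R\}^*M=\{\tau M:\tau\in\{L,M,R\}^*\}$. *)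

theory Defs
  imports "HOL-Library.Stream"
begin

text \<open>Infinite binary words are bool streams; False encodes letter 0, True encodes 1.\<close>

type_synonym word = "bool stream"

definition lex_less :: "word \<Rightarrow> word \<Rightarrow> bool" where
  "lex_less a b \<longleftrightarrow> (\<exists>n. stake n a = stake n b \<and> a !! n = False \<and> b !! n = True)"

definition lex_le :: "word \<Rightarrow> word \<Rightarrow> bool" where
  "lex_le a b \<longleftrightarrow> a = b \<or> lex_less a b"

definition lex_sup :: "word set \<Rightarrow> word" where
  "lex_sup S = (THE w. (\<forall>x\<in>S. lex_le x w) \<and> (\<forall>y. (\<forall>x\<in>S. lex_le x y) \<longrightarrow> lex_le w y))"

definition lex_inf :: "word set \<Rightarrow> word" where
  "lex_inf S = (THE w. (\<forall>x\<in>S. lex_le w x) \<and> (\<forall>y. (\<forall>x\<in>S. lex_le y x) \<longrightarrow> lex_le y w))"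

definition suffixes :: "word \<Rightarrow> word set" where
  "suffixes u = {sdrop k u | k. True}"

definition wsup :: "word \<Rightarrow> word" where
  "wsup u = lex_sup (suffixes u)"

definition winf :: "word \<Rightarrow> word" where
  "winf u = lex_inf (suffixes u)"

datatype gen = L | M | R

fun img :: "gen \<Rightarrow> bool \<Rightarrow> bool list" where
  "img L False = [False]"
| "img L True = [False, True]"
| "img M False = [False, True]"
| "img M True = [True, False]"
| "img R False = [False, True]"
| "img R True = [True]"

definition gen_app :: "gen \<Rightarrow> word \<Rightarrow> word" where
  "gen_app g s = flat (smap (img g) s)"

text \<open>An element of the monoid {L,M,R}* is a list [g1,...,gk] denoting g1 o ... o gk;
  the empty list is the identity, list append is composition.\<close>
definition subst_app :: "gen list \<Rightarrow> word \<Rightarrow> word" where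
  "subst_app \<sigma> s = foldr gen_app \<sigma> s"

end

theory Submission
  imports Defs
begin

lemma stake_eq_iff: "stake n a = stake n b \<longleftrightarrow> (\<forall>i<n. a !! i = b !! i)"
proof (induction n)
  case 0 then show ?case by simp
next
  case (Suc n)
  show ?case
    by (simp only: stake_Suc append1_eq_conv Suc.IH less_Suc_eq) blast
qed

lemma lt_iff: "lex_less a b \<longleftrightarrow> (\<exists>n. (\<forall>i<n. a !! i = b !! i) \<and> \<not> a !! n \<and> b !! n)"
  unfolding lex_less_def stake_eq_iff by auto

lemma stream_eqI: "(\<And>n. a !! n = b !! n) \<Longrightarrow> a = b"
  by (metis stream_smap_nats ext)

lemma lt_irrefl: "\<not> lex_less a a"
  unfolding lt_iff by auto

lemma lt_trans: "lex_less a b \<Longrightarrow> lex_less b c \<Longrightarrow> lex_less a c"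
  unfolding lt_iff
proof (elim exE conjE)
  fix n m
  assume 1: "\<forall>i<n. a !! i = b !! i" "\<not> a !! n" "b !! n"
    and 2: "\<forall>i<m. b !! i = c !! i" "\<not> b !! m" "c !! m"
  consider "n < m" | "m < n" | "n = m" by arith
  then show "\<exists>n. (\<forall>i<n. a !! i = c !! i) \<and> \<not> a !! n \<and> c !! n"
  proof cases
    case 1
    then show ?thesis using \<open>\<forall>i<n. a !! i = b !! i\<close> 2 \<open>\<not> a !! n\<close> \<open>b !! n\<close>
      by (intro exI[of _ n]) auto
  next
    case 2
    then show ?thesis using \<open>\<forall>i<n. a !! i = b !! i\<close> \<open>\<forall>i<m. b !! i = c !! i\<close> \<open>\<not> b !! m\<close> \<open>c !! m\<close>
      by (intro exI[of _ m]) auto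
  next
    case 3 then show ?thesis using 1 2 by auto
  qed
qed

lemma lt_asym: "lex_less a b \<Longrightarrow> \<not> lex_less b a"
  using lt_trans lt_irrefl by blast

lemma lt_total: "a \<noteq> b \<Longrightarrow> lex_less a b \<or> lex_less b a"
proof -
  assume "a \<noteq> b"
  then have "\<exists>n. a !! n \<noteq> b !! n" using stream_eqI by blast
  then obtain n where n: "a !! n \<noteq> b !! n" "\<forall>i<n. a !! i = b !! i"
    using exists_least_iff[of "\<lambda>n. a !! n \<noteq> b !! n"] by blast
  show ?thesis
  proof (cases "a !! n")
    case True then show ?thesis using n unfolding lt_iff by (intro disjI2 exI[of _ n]) auto
  next
    case False then show ?thesis using n unfolding lt_iff by (intro disjI1 exI[of _ n]) auto
  qed
qed

lemma le_refl[simp]: "lex_le a a" by (simp add: lex_le_def)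

lemma le_trans: "lex_le a b \<Longrightarrow> lex_le b c \<Longrightarrow> lex_le a c"
  unfolding lex_le_def using lt_trans by blast

lemma le_antisym: "lex_le a b \<Longrightarrow> lex_le b a \<Longrightarrow> a = b"
  unfolding lex_le_def using lt_asym by blast

lemma not_le: "\<not> lex_le a b \<longleftrightarrow> lex_less b a"
  unfolding lex_le_def using lt_total lt_asym lt_irrefl by blast

lemma lt_le_trans: "lex_less a b \<Longrightarrow> lex_le b c \<Longrightarrow> lex_less a c"
  unfolding lex_le_def using lt_trans by blast

lemma le_lt_trans: "lex_le a b \<Longrightarrow> lex_less b c \<Longrightarrow> lex_less a c"
  unfolding lex_le_def using lt_trans by blast

lemma lt_imp_le: "lex_less a b \<Longrightarrow> lex_le a b"
  unfolding lex_le_def by blast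

lemma lt_Stream: "lex_less (x ## a) (y ## b) \<longleftrightarrow> (\<not> x \<and> y) \<or> (x = y \<and> lex_less a b)"
proof
  assume "lex_less (x ## a) (y ## b)"
  then obtain n where n: "\<forall>i<n. (x ## a) !! i = (y ## b) !! i" "\<not> (x ## a) !! n" "(y ## b) !! n"
    unfolding lt_iff by blast
  show "(\<not> x \<and> y) \<or> (x = y \<and> lex_less a b)"
  proof (cases n)
    case 0 then show ?thesis using n by simp
  next
    case (Suc m)
    have "x = y" using n(1)[rule_format, of 0] Suc by simp
    moreover have "lex_less a b" unfolding lt_iff
    proof (intro exI[of _ m] conjI allI impI)
      fix i assume "i < m" then show "a !! i = b !! i"
        using n(1)[rule_format, of "Suc i"] Suc by simp
    qed (use n Suc in auto)
    ultimately show ?thesis by simp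
  qed
next
  assume "(\<not> x \<and> y) \<or> (x = y \<and> lex_less a b)"
  then show "lex_less (x ## a) (y ## b)"
  proof
    assume "\<not> x \<and> y" then show ?thesis unfolding lt_iff by (intro exI[of _ 0]) auto
  next
    assume h: "x = y \<and> lex_less a b"
    then obtain n where n: "\<forall>i<n. a !! i = b !! i" "\<not> a !! n" "b !! n" unfolding lt_iff by blast
    show ?thesis unfolding lt_iff
    proof (intro exI[of _ "Suc n"] conjI allI impI)
      fix i assume "i < Suc n" then show "(x ## a) !! i = (y ## b) !! i"
        using h n by (cases i) auto
    qed (use n in auto)
  qed
qed

lemma le_Stream: "lex_le (x ## a) (y ## b) \<longleftrightarrow> (\<not> x \<and> y) \<or> (x = y \<and> lex_le a b)"
  unfolding lex_le_def lt_Stream by auto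

lemma lt_shift: "lex_less (xs @- a) (xs @- b) \<longleftrightarrow> lex_less a b"
  by (induction xs) (auto simp: lt_Stream)

lemma le_shift: "lex_le (xs @- a) (xs @- b) \<longleftrightarrow> lex_le a b"
  unfolding lex_le_def lt_shift by simp

lemma lt_decomp: "lex_less a b \<Longrightarrow> \<exists>xs a' b'. a = xs @- False ## a' \<and> b = xs @- True ## b'"
proof -
  assume "lex_less a b"
  then obtain n where n: "stake n a = stake n b" "\<not> a !! n" "b !! n" unfolding lex_less_def by blast
  show ?thesis
    apply (rule exI[of _ "stake n a"], rule exI[of _ "sdrop (Suc n) a"], rule exI[of _ "sdrop (Suc n) b"])
    using id_stake_snth_sdrop[of a n] id_stake_snth_sdrop[of b n] n by simp
qed

lemma lt_cases_stream: "lex_less a b \<longleftrightarrow> lex_less (shd a ## stl a) (shd b ## stl b)"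
  by simp

lemma lt_shd: "lex_less a b \<Longrightarrow> \<not> shd b \<Longrightarrow> \<not> shd a"
  by (cases a; cases b) (auto simp: lt_Stream)

lemma le_shd: "lex_le a b \<Longrightarrow> \<not> shd b \<Longrightarrow> \<not> shd a"
  unfolding lex_le_def using lt_shd by blast

lemma lt_shd2: "lex_less a b \<Longrightarrow> shd a \<Longrightarrow> shd b"
  by (cases a; cases b) (auto simp: lt_Stream)

lemma le_shd2: "lex_le a b \<Longrightarrow> shd a \<Longrightarrow> shd b"
  unfolding lex_le_def using lt_shd2 by blast

lemma not_lt_F: "\<not> lex_less s (False ## s)"
proof
  assume "lex_less s (False ## s)"
  then obtain n where n: "\<forall>i<n. s !! i = (False ## s) !! i" "\<not> s !! n" "(False ## s) !! n"
    unfolding lt_iff by blast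
  have "\<forall>i\<le>n. \<not> (False ## s) !! i"
  proof (intro allI impI)
    fix i assume "i \<le> n" then show "\<not> (False ## s) !! i"
    proof (induction i)
      case 0 then show ?case by simp
    next
      case (Suc i)
      then have "\<not> (False ## s) !! i" by simp
      then have "\<not> s !! i" using n(1) Suc.prems by simp
      then show ?case by simp
    qed
  qed
  then show False using n(3) by blast
qed

lemma not_lt_T: "\<not> lex_less (True ## s) s"
proof
  assume "lex_less (True ## s) s"
  then obtain n where n: "\<forall>i<n. (True ## s) !! i = s !! i" "\<not> (True ## s) !! n" "s !! n"
    unfolding lt_iff by blast
  have "\<forall>i\<le>n. (True ## s) !! i"
  proof (intro allI impI)
    fix i assume "i \<le> n" then show "(True ## s) !! i"
    proof (induction i)
      case 0 then show ?case by simp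
    next
      case (Suc i)
      then have "(True ## s) !! i" by simp
      then have "s !! i" using n(1) Suc.prems by simp
      then show ?case by simp
    qed
  qed
  then show False using n(2) by blast
qed

lemma tail_ge: "\<not> shd c \<Longrightarrow> lex_le c (stl c)"
  using not_lt_F[of "stl c"] not_le by (metis stream.collapse)

lemma tail_le: "shd d \<Longrightarrow> lex_le (stl d) d"
  using not_lt_T[of "stl d"] not_le by (metis stream.collapse)


declare stake.simps(2)[simp del]

fun gpre :: "bool \<Rightarrow> word set \<Rightarrow> nat \<Rightarrow> bool list" where
  "gpre b S 0 = []"
| "gpre b S (Suc n) = gpre b S n @ [if (\<exists>x\<in>S. stake (Suc n) x = gpre b S n @ [b]) then b else \<not> b]"

lemma gpre_len[simp]: "length (gpre b S n) = n"
  by (induction n) auto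

lemma gpre_wit: "S \<noteq> {} \<Longrightarrow> \<exists>x\<in>S. stake n x = gpre b S n"
proof (induction n)
  case 0 then show ?case by auto
next
  case (Suc n)
  show ?case
  proof (cases "\<exists>x\<in>S. stake (Suc n) x = gpre b S n @ [b]")
    case True then show ?thesis by auto
  next
    case False
    obtain x where x: "x \<in> S" "stake n x = gpre b S n" using Suc by auto
    have "x !! n \<noteq> b" using False x by (auto simp: stake_Suc)
    then have "x !! n = (\<not> b)" by auto
    then show ?thesis using False x by (intro bexI[of _ x]) (simp_all add: stake_Suc)
  qed
qed

definition gw :: "bool \<Rightarrow> word set \<Rightarrow> word" where
  "gw b S = smap (\<lambda>n. gpre b S (Suc n) ! n) nats"

lemma gw_stake: "stake n (gw b S) = gpre b S n"
proof (induction n)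
  case 0 then show ?case by simp
next
  case (Suc n)
  have "gw b S !! n = gpre b S (Suc n) ! n" by (simp add: gw_def)
  then have "stake (Suc n) (gw b S) = gpre b S n @ [gpre b S (Suc n) ! n]"
    by (simp add: stake_Suc Suc)
  also have "\<dots> = gpre b S (Suc n)"
    by (simp del: gpre.simps(2) add: gpre.simps(2)[of b S n] nth_append)
  finally show ?case .
qed

lemma gw_snth: "gw b S !! n = (\<exists>x\<in>S. stake (Suc n) x = gpre b S n @ [b]) = b"
proof -
  have "gw b S !! n = gpre b S (Suc n) ! n" by (simp add: gw_def)
  then show ?thesis by (simp add: nth_append)
qed

lemma first_diff: "a \<noteq> b \<Longrightarrow> \<exists>n. stake n a = stake n b \<and> a !! n \<noteq> b !! n"
proof -
  assume "a \<noteq> b"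
  then have "\<exists>n. a !! n \<noteq> b !! n" using stream_eqI by blast
  then obtain n where n: "a !! n \<noteq> b !! n" "\<forall>i<n. a !! i = b !! i"
    using exists_least_iff[of "\<lambda>n. a !! n \<noteq> b !! n"] by blast
  then show ?thesis using stake_eq_iff by blast
qed

lemma inf_exists: "S \<noteq> {} \<Longrightarrow> (\<forall>x\<in>S. lex_le (gw False S) x) \<and> (\<forall>y. (\<forall>x\<in>S. lex_le y x) \<longrightarrow> lex_le y (gw False S))"
proof (intro conjI ballI allI impI)
  fix x assume "x \<in> S"
  show "lex_le (gw False S) x"
  proof (cases "x = gw False S")
    case True then show ?thesis by simp
  next
    case False
    then obtain n where n: "stake n x = stake n (gw False S)" "x !! n \<noteq> gw False S !! n"
      using first_diff by blast
    have "x !! n"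
    proof (rule ccontr)
      assume "\<not> x !! n"
      then have "stake (Suc n) x = gpre False S n @ [False]" using n by (simp add: stake_Suc gw_stake)
      then have "\<not> gw False S !! n" using \<open>x \<in> S\<close> gw_snth[of False S n] by auto
      then show False using n \<open>\<not> x !! n\<close> by simp
    qed
    then have "lex_less (gw False S) x" unfolding lex_less_def using n by (intro exI[of _ n]) auto
    then show ?thesis by (rule lt_imp_le)
  qed
next
  fix y assume y: "\<forall>x\<in>S. lex_le y x" and ne: "S \<noteq> {}"
  show "lex_le y (gw False S)"
  proof (rule ccontr)
    assume "\<not> lex_le y (gw False S)"
    then have "lex_less (gw False S) y" by (simp add: not_le)
    then obtain n where n: "stake n (gw False S) = stake n y" "\<not> gw False S !! n" "y !! n"
      unfolding lex_less_def by blast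
    then obtain x where x: "x \<in> S" "stake (Suc n) x = gpre False S n @ [False]"
      using gw_snth[of False S n] by auto
    then have "stake n x = stake n y" "\<not> x !! n"
      using n(1) gw_stake by (simp_all add: stake_Suc)
    then have "lex_less x y" unfolding lex_less_def using n(3) by blast
    then show False using y x(1) lt_le_trans lt_irrefl by blast
  qed
qed

lemma sup_exists: "S \<noteq> {} \<Longrightarrow> (\<forall>x\<in>S. lex_le x (gw True S)) \<and> (\<forall>y. (\<forall>x\<in>S. lex_le x y) \<longrightarrow> lex_le (gw True S) y)"
proof (intro conjI ballI allI impI)
  fix x assume "x \<in> S"
  show "lex_le x (gw True S)"
  proof (cases "x = gw True S")
    case True then show ?thesis by simp
  next
    case False
    then obtain n where n: "stake n x = stake n (gw True S)" "x !! n \<noteq> gw True S !! n"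
      using first_diff by blast
    have "\<not> x !! n"
    proof
      assume "x !! n"
      then have "stake (Suc n) x = gpre True S n @ [True]" using n by (simp add: stake_Suc gw_stake)
      then have "gw True S !! n" using \<open>x \<in> S\<close> gw_snth[of True S n] by auto
      then show False using n \<open>x !! n\<close> by simp
    qed
    then have "lex_less x (gw True S)" unfolding lex_less_def using n by (intro exI[of _ n]) auto
    then show ?thesis by (rule lt_imp_le)
  qed
next
  fix y assume y: "\<forall>x\<in>S. lex_le x y" and ne: "S \<noteq> {}"
  show "lex_le (gw True S) y"
  proof (rule ccontr)
    assume "\<not> lex_le (gw True S) y"
    then have "lex_less y (gw True S)" by (simp add: not_le)
    then obtain n where n: "stake n y = stake n (gw True S)" "\<not> y !! n" "gw True S !! n"
      unfolding lex_less_def by blast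
    then obtain x where x: "x \<in> S" "stake (Suc n) x = gpre True S n @ [True]"
      using gw_snth[of True S n] by auto
    then have "stake n y = stake n x" "x !! n"
      using n(1) gw_stake by (simp_all add: stake_Suc)
    then have "lex_less y x" unfolding lex_less_def using n(2) by blast
    then show False using y x(1) lt_le_trans lt_irrefl by blast
  qed
qed

lemma lex_inf_prop: assumes "S \<noteq> {}"
  shows "(\<forall>x\<in>S. lex_le (lex_inf S) x) \<and> (\<forall>y. (\<forall>x\<in>S. lex_le y x) \<longrightarrow> lex_le y (lex_inf S))"
proof -
  have "lex_inf S = gw False S"
    unfolding lex_inf_def
    by (rule the_equality) (use inf_exists[OF assms] le_antisym in blast)+
  then show ?thesis using inf_exists[OF assms] by simp
qed

lemma lex_sup_prop: assumes "S \<noteq> {}"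
  shows "(\<forall>x\<in>S. lex_le x (lex_sup S)) \<and> (\<forall>y. (\<forall>x\<in>S. lex_le x y) \<longrightarrow> lex_le (lex_sup S) y)"
proof -
  have "lex_sup S = gw True S"
    unfolding lex_sup_def
    by (rule the_equality) (use sup_exists[OF assms] le_antisym in blast)+
  then show ?thesis using sup_exists[OF assms] by simp
qed

lemma suffixes_ne: "suffixes u \<noteq> {}"
  unfolding suffixes_def by auto

lemma winf_lb: "lex_le (winf u) (sdrop k u)"
  using lex_inf_prop[OF suffixes_ne] unfolding winf_def suffixes_def by blast

lemma winf_glb: "(\<And>k. lex_le y (sdrop k u)) \<Longrightarrow> lex_le y (winf u)"
  using lex_inf_prop[OF suffixes_ne] unfolding winf_def suffixes_def by blast

lemma wsup_ub: "lex_le (sdrop k u) (wsup u)"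
  using lex_sup_prop[OF suffixes_ne] unfolding wsup_def suffixes_def by blast

lemma wsup_lub: "(\<And>k. lex_le (sdrop k u) y) \<Longrightarrow> lex_le (wsup u) y"
  using lex_sup_prop[OF suffixes_ne] unfolding wsup_def suffixes_def by blast


lemma img_ne[simp]: "img g b \<noteq> []"
  by (cases g; cases b) auto

lemma gen_app_Stream: "gen_app g (b ## s) = img g b @- gen_app g s"
  unfolding gen_app_def by simp

lemma gen_app_shift: "gen_app g (xs @- s) = concat (map (img g) xs) @- gen_app g s"
  by (induction xs) (auto simp: gen_app_Stream)

lemma gen_app_sdrop:
  "sdrop (length (concat (map (img g) (stake k w)))) (gen_app g w) = gen_app g (sdrop k w)"
proof -
  have "gen_app g w = concat (map (img g) (stake k w)) @- gen_app g (sdrop k w)"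
    using gen_app_shift[of g "stake k w" "sdrop k w"] by (simp add: stake_sdrop)
  then show ?thesis by (metis sdrop_shift diff_self_eq_0 drop_all order_refl sdrop.simps(1) shift.simps(1))
qed

lemma gen_app_sdrop_ex: "\<exists>m. sdrop m (gen_app g w) = gen_app g (sdrop k w)"
  using gen_app_sdrop by blast

lemma sdrop_Suc_Stream: "sdrop k w = w !! k ## sdrop (Suc k) w"
  by (metis sdrop_simps stream.collapse)

lemma suffix_form:
  "\<exists>k j. j < length (img g (w !! k)) \<and> sdrop n (gen_app g w) = drop j (img g (w !! k)) @- gen_app g (sdrop (Suc k) w)"
proof (induction n)
  case 0
  have "gen_app g w = img g (w !! 0) @- gen_app g (sdrop (Suc 0) w)"
    using gen_app_Stream[of g "shd w" "stl w"] by simp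
  then show ?case by (intro exI[of _ 0]) auto
next
  case (Suc n)
  then obtain k j where kj: "j < length (img g (w !! k))"
    "sdrop n (gen_app g w) = drop j (img g (w !! k)) @- gen_app g (sdrop (Suc k) w)" by blast
  have "sdrop (Suc n) (gen_app g w) = stl (sdrop n (gen_app g w))" by simp
  also have "\<dots> = drop (Suc j) (img g (w !! k)) @- gen_app g (sdrop (Suc k) w)"
    using kj by (simp add: drop_Suc tl_drop)
  finally have e: "sdrop (Suc n) (gen_app g w) = drop (Suc j) (img g (w !! k)) @- gen_app g (sdrop (Suc k) w)" .
  show ?case
  proof (cases "Suc j < length (img g (w !! k))")
    case True then show ?thesis using e by blast
  next
    case False
    then have "drop (Suc j) (img g (w !! k)) = []" by simp
    then have "sdrop (Suc n) (gen_app g w) = img g (w !! Suc k) @- gen_app g (sdrop (Suc (Suc k)) w)"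
      using e sdrop_Suc_Stream[of "Suc k" w] by (simp add: gen_app_Stream)
    then show ?thesis by (intro exI[of _ "Suc k"] exI[of _ 0]) auto
  qed
qed

lemma shd_L: "shd (gen_app L s) = False"
  by (cases s; cases "shd s") (auto simp: gen_app_Stream)

lemma shd_M: "shd (gen_app M s) = shd s"
  by (cases s; cases "shd s") (auto simp: gen_app_Stream)

lemma shd_R: "shd (gen_app R s) = shd s"
  by (cases s; cases "shd s") (auto simp: gen_app_Stream)

lemma L_Stream: "gen_app L s = False ## stl (gen_app L s)"
  by (metis shd_L stream.collapse)

lemma gen_mono_lt: "lex_less a b \<Longrightarrow> lex_less (gen_app g a) (gen_app g b)"
proof -
  assume "lex_less a b"
  then obtain xs a' b' where ab: "a = xs @- False ## a'" "b = xs @- True ## b'" using lt_decomp by blast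
  have "lex_less (img g False @- gen_app g a') (img g True @- gen_app g b')"
  proof (cases g)
    case L then show ?thesis
    proof -
      have "lex_less (gen_app L a') (True ## gen_app L b')"
        by (subst L_Stream) (simp add: lt_Stream)
      then show ?thesis using L by (simp add: lt_Stream)
    qed
  next
    case M then show ?thesis by (simp add: lt_Stream)
  next
    case R then show ?thesis by (simp add: lt_Stream)
  qed
  then show ?thesis using ab by (simp add: gen_app_shift gen_app_Stream lt_shift)
qed

lemma gen_mono_le: "lex_le a b \<Longrightarrow> lex_le (gen_app g a) (gen_app g b)"
  unfolding lex_le_def using gen_mono_lt by blast

lemma gen_lt_cancel: "lex_less (gen_app g a) (gen_app g b) \<Longrightarrow> lex_less a b"
  by (metis gen_mono_le lt_asym not_le lex_le_def lt_irrefl)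

lemma sset_gen: "b \<in> sset w \<Longrightarrow> b \<in> sset (gen_app g w)"
proof -
  assume "b \<in> sset w"
  moreover have "b \<in> set (img g b)" by (cases g; cases b) auto
  ultimately show ?thesis unfolding gen_app_def
    by (subst sset_flat) (auto simp: stream.set_map)
qed

lemma subst_app_Cons: "subst_app (g # \<sigma>) v = gen_app g (subst_app \<sigma> v)"
  by (simp add: subst_app_def)

lemma subst_app_Nil: "subst_app [] v = v"
  by (simp add: subst_app_def)

lemma subst_app_append: "subst_app (\<sigma> @ \<tau>) v = subst_app \<sigma> (subst_app \<tau> v)"
  by (simp add: subst_app_def)

lemma sset_subst: "b \<in> sset w \<Longrightarrow> b \<in> sset (subst_app \<sigma> w)"
  by (induction \<sigma>) (auto simp: subst_app_Cons subst_app_Nil sset_gen)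

lemma sset_snth_ex: "b \<in> sset w \<Longrightarrow> \<exists>n. w !! n = b"
  by (metis imageE sset_range)


lemma suffix_j0: "drop 0 (img g (w !! k)) @- gen_app g (sdrop (Suc k) w) = gen_app g (sdrop k w)"
proof -
  have "gen_app g (sdrop k w) = img g (w !! k) @- gen_app g (sdrop (Suc k) w)"
    by (metis gen_app_Stream sdrop_Suc_Stream)
  then show ?thesis by (simp only: drop_0)
qed

lemma shd_c: "False \<in> sset x \<Longrightarrow> \<not> shd (winf x)"
proof -
  assume "False \<in> sset x"
  then obtain n where n: "x !! n = False" using sset_snth_ex by metis
  have "\<not> shd (sdrop n x)" by (simp only: sdrop_simps n not_False_eq_True)
  then show ?thesis by (rule le_shd[OF winf_lb[of x n]])
qed

lemma shd_d: "True \<in> sset y \<Longrightarrow> shd (wsup y)"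
proof -
  assume "True \<in> sset y"
  then obtain n where n: "y !! n = True" using sset_snth_ex by metis
  have "shd (sdrop n y)" by (simp only: sdrop_simps n)
  then show ?thesis by (rule le_shd2[OF wsup_ub[of n y]])
qed

lemma lt_FT: "\<not> shd a \<Longrightarrow> lex_less a (True ## s)"
  by (cases a) (simp add: lt_Stream)

lemma lt_FT2: "shd a \<Longrightarrow> lex_less (False ## s) a"
  by (cases a) (simp add: lt_Stream)

lemma L_lower: "lex_le (gen_app L (winf x)) (winf (gen_app L x))"
proof (rule winf_glb)
  fix n
  obtain k j where kj: "j < length (img L (x !! k))"
    "sdrop n (gen_app L x) = drop j (img L (x !! k)) @- gen_app L (sdrop (Suc k) x)"
    using suffix_form by blast
  show "lex_le (gen_app L (winf x)) (sdrop n (gen_app L x))"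
  proof (cases "j = 0")
    case True
    then have "sdrop n (gen_app L x) = gen_app L (sdrop k x)" using kj suffix_j0 by simp
    then show ?thesis using gen_mono_le[OF winf_lb[of x k]] by simp
  next
    case False
    then have "x !! k" "j = 1" using kj(1) by (cases "x !! k"; simp)+
    then have "sdrop n (gen_app L x) = True ## gen_app L (sdrop (Suc k) x)" using kj by simp
    then show ?thesis using lt_FT[of "gen_app L (winf x)"] shd_L lt_imp_le by simp
  qed
qed

lemma L_upper: assumes "shd (wsup y)"
  shows "lex_le (wsup (gen_app L y)) (True ## gen_app L (stl (wsup y)))"
proof (rule wsup_lub)
  fix n
  obtain k j where kj: "j < length (img L (y !! k))"
    "sdrop n (gen_app L y) = drop j (img L (y !! k)) @- gen_app L (sdrop (Suc k) y)"
    using suffix_form by blast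
  show "lex_le (sdrop n (gen_app L y)) (True ## gen_app L (stl (wsup y)))"
  proof (cases "j = 0")
    case True
    then have "sdrop n (gen_app L y) = gen_app L (sdrop k y)" using kj suffix_j0 by simp
    then show ?thesis using lt_FT[of "gen_app L (sdrop k y)"] shd_L lt_imp_le by simp
  next
    case False
    then have yk: "y !! k" "j = 1" using kj(1) by (cases "y !! k"; simp)+
    then have e: "sdrop n (gen_app L y) = True ## gen_app L (sdrop (Suc k) y)" using kj by simp
    have "lex_le (sdrop k y) (wsup y)" by (rule wsup_ub)
    then have "lex_le (True ## sdrop (Suc k) y) (True ## stl (wsup y))"
      using sdrop_Suc_Stream[of k y] yk assms stream.collapse[of "wsup y"] by (metis stream.sel(1))
    then have "lex_le (sdrop (Suc k) y) (stl (wsup y))" by (simp add: le_Stream)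
    then show ?thesis using e gen_mono_le by (simp add: le_Stream)
  qed
qed

primcorec parseL :: "word \<Rightarrow> word" where
  "parseL s = (if s !! 1 then True ## parseL (sdrop 2 s) else False ## parseL (stl s))"


definition no11 :: "word \<Rightarrow> bool" where
  "no11 s \<longleftrightarrow> (\<forall>n. \<not> (s !! n \<and> s !! Suc n))"

lemma no11_sdrop: "no11 s \<Longrightarrow> no11 (sdrop k s)"
  unfolding no11_def by (simp add: sdrop_snth)

lemma parseL_correct:
  assumes "\<not> shd s" "no11 s"
  shows "gen_app L (parseL s) = s"
proof -
  define Rel where "Rel a b \<longleftrightarrow> (\<exists>s. \<not> shd s \<and> no11 s \<and> a = gen_app L (parseL s) \<and> b = s)
     \<or> (\<exists>s. \<not> shd s \<and> no11 s \<and> a = True ## gen_app L (parseL s) \<and> b = True ## s)" for a b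
  have rel0: "Rel (gen_app L (parseL s)) s" using assms unfolding Rel_def by blast
  show ?thesis
  proof (rule stream.coinduct[of Rel, OF rel0])
    fix a b assume Eq_stream: "Rel a b"
    show "shd a = shd b \<and> Rel (stl a) (stl b)"
    proof (cases "\<exists>s. \<not> shd s \<and> no11 s \<and> a = gen_app L (parseL s) \<and> b = s")
      case True
      then obtain s where s: "\<not> shd s" "no11 s" "a = gen_app L (parseL s)" "b = s" by blast
      show ?thesis
      proof (cases "s !! Suc 0")
        case True
        have pl: "parseL s = True ## parseL (sdrop 2 s)" using True by (subst parseL.code) simp
        have a: "a = False ## True ## gen_app L (parseL (sdrop 2 s))"
          using s(3) pl by (simp add: gen_app_Stream)
        have n2: "\<not> s !! Suc (Suc 0)" using s(2)[unfolded no11_def, rule_format, of "Suc 0"] True by simp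
        have s2: "\<not> shd (sdrop 2 s)" by (simp only: sdrop_simps numeral_2_eq_2) (rule n2)
        have n3: "no11 (sdrop 2 s)" using no11_sdrop[OF s(2)] by blast
        have st: "stl s = True ## sdrop 2 s" using True sdrop_Suc_Stream[of "Suc 0" s]
          by (simp add: numeral_2_eq_2)
        have "Rel (stl a) (stl b)" unfolding Rel_def
          by (rule disjI2, rule exI[of _ "sdrop 2 s"]) (intro conjI s2 n3, simp add: a, simp only: s(4) st)
        moreover have "shd a = shd b" using a s(1) s(4) by simp
        ultimately show ?thesis by blast
      next
        case False
        have pl: "parseL s = False ## parseL (stl s)" using False by (subst parseL.code) simp
        have a: "a = False ## gen_app L (parseL (stl s))"
          using s(3) pl by (simp add: gen_app_Stream)
        have n1: "\<not> shd (stl s)" using False by simp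
        have n3: "no11 (stl s)" using no11_sdrop[OF s(2), of "Suc 0"] by simp
        have "Rel (stl a) (stl b)" unfolding Rel_def
          by (rule disjI1, rule exI[of _ "stl s"]) (simp add: a s(4) n1 n3)
        moreover have "shd a = shd b" using a s(1) s(4) by simp
        ultimately show ?thesis by blast
      qed
    next
      case False
      then obtain s where s: "\<not> shd s" "no11 s" "a = True ## gen_app L (parseL s)" "b = True ## s"
        using Eq_stream unfolding Rel_def by blast
      have "Rel (stl a) (stl b)" unfolding Rel_def
        by (rule disjI1, rule exI[of _ s]) (simp add: s)
      then show ?thesis using s by simp
    qed
  qed
qed


lemma sdrop_Suc_Stream2: "sdrop k w = w !! k ## w !! Suc k ## sdrop (Suc (Suc k)) w"
  by (metis sdrop_Suc_Stream)

lemma step_L: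
  assumes F: "False \<in> sset x" and T: "True \<in> sset y"
    and H: "\<forall>k. lex_le (winf (gen_app L x)) (sdrop k u) \<and> lex_le (sdrop k u) (wsup (gen_app L y))"
  shows "\<exists>m w. sdrop m u = gen_app L w \<and> (\<forall>k. lex_le (winf x) (sdrop k w) \<and> lex_le (sdrop k w) (wsup y))"
proof -
  define c where "c = winf x"
  define d where "d = wsup y"
  have hd: "shd d" unfolding d_def by (rule shd_d[OF T])
  have up: "lex_le (sdrop k u) (True ## gen_app L (stl d))" for k
    using le_trans[OF conjunct2[OF H[rule_format, of k]] L_upper[OF shd_d[OF T]]] unfolding d_def .
  have lo: "lex_le (gen_app L c) (sdrop k u)" for k
    using le_trans[OF L_lower conjunct1[OF H[rule_format, of k]]] unfolding c_def .
  have n11: "no11 u" unfolding no11_def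
  proof (intro allI notI)
    fix n assume a: "u !! n \<and> u !! Suc n"
    have e1: "sdrop n u = True ## True ## sdrop (Suc (Suc n)) u"
      using sdrop_Suc_Stream2[of n u] a by simp
    obtain Y where Y: "gen_app L (stl d) = False ## Y" using L_Stream by metis
    show False using up[of n] unfolding e1 Y by (simp add: le_Stream)
  qed
  define m where "m = (if shd u then Suc 0 else 0)"
  have s1: "\<not> shd (sdrop m u)"
  proof (cases "shd u")
    case True
    then have "\<not> u !! Suc 0" using n11 unfolding no11_def by (metis snth.simps(1))
    then show ?thesis using True by (simp add: m_def)
  next
    case False then show ?thesis by (simp add: m_def)
  qed
  define w where "w = parseL (sdrop m u)"
  have uw: "sdrop m u = gen_app L w" unfolding w_def
    using parseL_correct[OF s1 no11_sdrop[OF n11]] by simp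
  have "lex_le c (sdrop k w) \<and> lex_le (sdrop k w) d" for k
  proof -
    obtain m' where m': "sdrop m' (gen_app L w) = gen_app L (sdrop k w)" using gen_app_sdrop_ex by blast
    then have um: "sdrop (m + m') u = gen_app L (sdrop k w)" using uw by (metis sdrop_add)
    have "lex_le c (sdrop k w)"
    proof (rule ccontr)
      assume "\<not> lex_le c (sdrop k w)"
      then have "lex_less (sdrop k w) c" by (simp add: not_le)
      then have "lex_less (gen_app L (sdrop k w)) (gen_app L c)" by (rule gen_mono_lt)
      then show False using lo[of "m + m'"] um lt_le_trans lt_irrefl by metis
    qed
    moreover have "lex_le (sdrop k w) d"
    proof (rule ccontr)
      assume "\<not> lex_le (sdrop k w) d"
      then have lt: "lex_less d (sdrop k w)" by (simp add: not_le)
      then have "shd (sdrop k w)" using lt_shd2 hd by blast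
      then have e: "sdrop k w = True ## sdrop (Suc k) w" using sdrop_Suc_Stream[of k w] by simp
      have "lex_less (stl d) (sdrop (Suc k) w)"
        using lt e hd by (metis lt_Stream stream.collapse)
      then have lt2: "lex_less (True ## gen_app L (stl d)) (True ## gen_app L (sdrop (Suc k) w))"
        by (simp add: lt_Stream gen_mono_lt)
      have "sdrop (m + m') u = False ## True ## gen_app L (sdrop (Suc k) w)"
        using um e by (simp add: gen_app_Stream)
      then have "sdrop (Suc (m + m')) u = True ## gen_app L (sdrop (Suc k) w)"
        by (metis sdrop_simps(2) stream.sel(2))
      then show False using up[of "Suc (m + m')"] lt2 lt_le_trans lt_irrefl by metis
    qed
    ultimately show ?thesis by blast
  qed
  then show ?thesis using uw unfolding c_def d_def by blast
qed


lemma R_lower: assumes "\<not> shd (winf x)"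
  shows "lex_le (gen_app R (winf x)) (winf (gen_app R x))"
proof (rule winf_glb)
  fix n
  obtain k j where kj: "j < length (img R (x !! k))"
    "sdrop n (gen_app R x) = drop j (img R (x !! k)) @- gen_app R (sdrop (Suc k) x)"
    using suffix_form by blast
  show "lex_le (gen_app R (winf x)) (sdrop n (gen_app R x))"
  proof (cases "j = 0")
    case True
    then have "sdrop n (gen_app R x) = gen_app R (sdrop k x)" using kj suffix_j0 by simp
    then show ?thesis using gen_mono_le[OF winf_lb[of x k]] by simp
  next
    case False
    then have "\<not> x !! k" "j = 1" using kj(1) by (cases "x !! k"; simp)+
    then have "sdrop n (gen_app R x) = True ## gen_app R (sdrop (Suc k) x)" using kj by simp
    moreover have "\<not> shd (gen_app R (winf x))" using assms shd_R by simp
    ultimately show ?thesis using lt_FT lt_imp_le by metis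
  qed
qed

lemma R_upper: assumes hd: "shd (wsup y)"
  shows "lex_le (wsup (gen_app R y)) (True ## gen_app R (wsup y))"
proof (rule wsup_lub)
  fix n
  define d where "d = wsup y"
  have dd: "d = True ## stl d" using hd unfolding d_def by (metis stream.collapse)
  have Rd: "gen_app R d = True ## gen_app R (stl d)"
    by (subst dd) (simp add: gen_app_Stream)
  have Rd2: "lex_le (gen_app R d) (True ## gen_app R d)"
  proof -
    have "lex_le (stl d) d" using tail_le hd unfolding d_def by blast
    then have "lex_le (gen_app R (stl d)) (gen_app R d)" by (rule gen_mono_le)
    then show ?thesis by (subst Rd) (simp add: le_Stream)
  qed
  obtain k j where kj: "j < length (img R (y !! k))"
    "sdrop n (gen_app R y) = drop j (img R (y !! k)) @- gen_app R (sdrop (Suc k) y)"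
    using suffix_form by blast
  show "lex_le (sdrop n (gen_app R y)) (True ## gen_app R (wsup y))"
  proof (cases "j = 0")
    case True
    then have "sdrop n (gen_app R y) = gen_app R (sdrop k y)" using kj suffix_j0 by simp
    moreover have "lex_le (gen_app R (sdrop k y)) (gen_app R d)"
      using gen_mono_le[OF wsup_ub[of k y]] unfolding d_def .
    ultimately show ?thesis using Rd2 le_trans unfolding d_def by metis
  next
    case False
    then have "\<not> y !! k" "j = 1" using kj(1) by (cases "y !! k"; simp)+
    then have e: "sdrop n (gen_app R y) = True ## gen_app R (sdrop (Suc k) y)" using kj by simp
    have "lex_le (gen_app R (sdrop (Suc k) y)) (gen_app R (wsup y))"
      using gen_mono_le[OF wsup_ub[of "Suc k" y]] .
    then show ?thesis using e by (simp add: le_Stream)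
  qed
qed

primcorec parseR :: "word \<Rightarrow> word" where
  "parseR s = (if shd s then True ## parseR (stl s) else False ## parseR (sdrop 2 s))"

definition no00 :: "word \<Rightarrow> bool" where
  "no00 s \<longleftrightarrow> (\<forall>n. \<not> (\<not> s !! n \<and> \<not> s !! Suc n))"

lemma no00_sdrop: "no00 s \<Longrightarrow> no00 (sdrop k s)"
  unfolding no00_def by (simp add: sdrop_snth)

lemma parseR_correct:
  assumes "no00 s"
  shows "gen_app R (parseR s) = s"
proof -
  define Rel where "Rel a b \<longleftrightarrow> (\<exists>s. no00 s \<and> a = gen_app R (parseR s) \<and> b = s)
     \<or> (\<exists>s. no00 s \<and> a = True ## gen_app R (parseR s) \<and> b = True ## s)" for a b
  have rel0: "Rel (gen_app R (parseR s)) s" using assms unfolding Rel_def by blast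
  show ?thesis
  proof (rule stream.coinduct[of Rel, OF rel0])
    fix a b assume Eq_stream: "Rel a b"
    show "shd a = shd b \<and> Rel (stl a) (stl b)"
    proof (cases "\<exists>s. no00 s \<and> a = gen_app R (parseR s) \<and> b = s")
      case True
      then obtain s where s: "no00 s" "a = gen_app R (parseR s)" "b = s" by blast
      show ?thesis
      proof (cases "shd s")
        case False
        have pl: "parseR s = False ## parseR (sdrop 2 s)" using False by (subst parseR.code) simp
        have a: "a = False ## True ## gen_app R (parseR (sdrop 2 s))"
          using s(2) pl by (simp add: gen_app_Stream)
        have n2: "s !! Suc 0" using s(1)[unfolded no00_def, rule_format, of 0] False by simp
        have n3: "no00 (sdrop 2 s)" using no00_sdrop[OF s(1)] by blast
        have st: "stl s = True ## sdrop 2 s" using n2 sdrop_Suc_Stream[of "Suc 0" s]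
          by (simp add: numeral_2_eq_2)
        have "Rel (stl a) (stl b)" unfolding Rel_def
          by (rule disjI2, rule exI[of _ "sdrop 2 s"]) (intro conjI n3, simp add: a, simp only: s(3) st)
        moreover have "shd a = shd b" using a False s(3) by simp
        ultimately show ?thesis by blast
      next
        case True
        have pl: "parseR s = True ## parseR (stl s)" using True by (subst parseR.code) simp
        have a: "a = True ## gen_app R (parseR (stl s))"
          using s(2) pl by (simp add: gen_app_Stream)
        have n3: "no00 (stl s)" using no00_sdrop[OF s(1), of "Suc 0"] by simp
        have "Rel (stl a) (stl b)" unfolding Rel_def
          by (rule disjI1, rule exI[of _ "stl s"]) (simp add: a s(3) n3)
        moreover have "shd a = shd b" using a True s(3) by simp
        ultimately show ?thesis by blast
      qed
    next
      case False
      then obtain s where s: "no00 s" "a = True ## gen_app R (parseR s)" "b = True ## s"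
        using Eq_stream unfolding Rel_def by blast
      have "Rel (stl a) (stl b)" unfolding Rel_def
        by (rule disjI1, rule exI[of _ s]) (simp add: s)
      then show ?thesis using s by simp
    qed
  qed
qed

lemma R_pre: "\<exists>m. sdrop m (gen_app R w) = True ## gen_app R (sdrop (Suc k) w)"
proof -
  obtain m0 where m0: "sdrop m0 (gen_app R w) = gen_app R (sdrop k w)" using gen_app_sdrop_ex by blast
  also have "\<dots> = img R (w !! k) @- gen_app R (sdrop (Suc k) w)"
    by (metis gen_app_Stream sdrop_Suc_Stream)
  finally have e: "sdrop m0 (gen_app R w) = img R (w !! k) @- gen_app R (sdrop (Suc k) w)" .
  show ?thesis
  proof (cases "w !! k")
    case True then show ?thesis using e by auto
  next
    case False
    then have "sdrop m0 (gen_app R w) = False ## True ## gen_app R (sdrop (Suc k) w)" using e by simp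
    then have "sdrop (Suc m0) (gen_app R w) = True ## gen_app R (sdrop (Suc k) w)"
      by (metis sdrop_simps(2) stream.sel(2))
    then show ?thesis by blast
  qed
qed

lemma step_R:
  assumes F: "False \<in> sset x" and T: "True \<in> sset y"
    and H: "\<forall>k. lex_le (winf (gen_app R x)) (sdrop k u) \<and> lex_le (sdrop k u) (wsup (gen_app R y))"
  shows "\<exists>m w. sdrop m u = gen_app R w \<and> (\<forall>k. lex_le (winf x) (sdrop k w) \<and> lex_le (sdrop k w) (wsup y))"
proof -
  define c where "c = winf x"
  define d where "d = wsup y"
  have hd: "shd d" unfolding d_def by (rule shd_d[OF T])
  have hc: "\<not> shd c" unfolding c_def by (rule shd_c[OF F])
  have up: "lex_le (sdrop k u) (True ## gen_app R d)" for k
    using le_trans[OF conjunct2[OF H[rule_format, of k]] R_upper[OF shd_d[OF T]]] unfolding d_def .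
  have lo: "lex_le (gen_app R c) (sdrop k u)" for k
    using le_trans[OF R_lower[OF shd_c[OF F]] conjunct1[OF H[rule_format, of k]]] unfolding c_def .
  have n00: "no00 u" unfolding no00_def
  proof (intro allI notI)
    fix n assume a: "\<not> u !! n \<and> \<not> u !! Suc n"
    have e1: "sdrop n u = False ## False ## sdrop (Suc (Suc n)) u"
      using sdrop_Suc_Stream2[of n u] a by simp
    have cc: "c = False ## stl c" using hc by (metis stream.collapse)
    have Y: "gen_app R c = False ## True ## gen_app R (stl c)"
      by (subst cc) (simp add: gen_app_Stream)
    show False using lo[of n] unfolding e1 Y by (simp add: le_Stream)
  qed
  define w0 where "w0 = parseR u"
  have uw0: "u = gen_app R w0" unfolding w0_def using parseR_correct[OF n00] by simp
  define w where "w = stl w0"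
  obtain m where uw: "sdrop m u = gen_app R w"
    using gen_app_sdrop_ex[of R w0 "Suc 0"] uw0 unfolding w_def by auto
  have "lex_le c (sdrop k w) \<and> lex_le (sdrop k w) d" for k
  proof -
    have sk: "sdrop k w = sdrop (Suc k) w0" unfolding w_def by simp
    obtain m' where m': "sdrop m' u = gen_app R (sdrop k w)"
      using gen_app_sdrop_ex[of R w0 "Suc k"] uw0 sk by auto
    obtain m'' where m'': "sdrop m'' u = True ## gen_app R (sdrop k w)"
      using R_pre[of w0 k] uw0 sk by auto
    have "lex_le c (sdrop k w)"
    proof (rule ccontr)
      assume "\<not> lex_le c (sdrop k w)"
      then have "lex_less (sdrop k w) c" by (simp add: not_le)
      then have "lex_less (gen_app R (sdrop k w)) (gen_app R c)" by (rule gen_mono_lt)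
      then show False using lo[of m'] m' lt_le_trans lt_irrefl by metis
    qed
    moreover have "lex_le (sdrop k w) d"
    proof (rule ccontr)
      assume "\<not> lex_le (sdrop k w) d"
      then have "lex_less d (sdrop k w)" by (simp add: not_le)
      then have "lex_less (True ## gen_app R d) (True ## gen_app R (sdrop k w))"
        by (simp add: lt_Stream gen_mono_lt)
      then show False using up[of m''] m'' lt_le_trans lt_irrefl by metis
    qed
    ultimately show ?thesis by blast
  qed
  then show ?thesis using uw unfolding c_def d_def by blast
qed


lemma M_Stream2: "gen_app M w = shd w ## (\<not> shd w) ## gen_app M (stl w)"
  by (cases w; cases "shd w") (auto simp: gen_app_Stream)

lemma M_snth: "gen_app M w !! (2*i) = w !! i \<and> gen_app M w !! Suc (2*i) = (\<not> w !! i)"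
proof (induction i arbitrary: w)
  case 0 then show ?case by (subst (1 2) M_Stream2) simp
next
  case (Suc i)
  have "gen_app M w !! (2 * Suc i) = gen_app M (stl w) !! (2*i)"
    by (subst M_Stream2) simp
  moreover have "gen_app M w !! Suc (2 * Suc i) = gen_app M (stl w) !! Suc (2*i)"
    by (subst M_Stream2) simp
  ultimately show ?case using Suc[of "stl w"] by simp
qed

lemma M_sdrop2: "sdrop (2*k) (gen_app M w) = gen_app M (sdrop k w)"
proof (induction k arbitrary: w)
  case 0 then show ?case by simp
next
  case (Suc k)
  have "sdrop (2 * Suc k) (gen_app M w) = sdrop (2*k) (stl (stl (gen_app M w)))"
    by (simp add: sdrop.simps)
  also have "stl (stl (gen_app M w)) = gen_app M (stl w)" by (subst M_Stream2) simp
  finally show ?case using Suc[of "stl w"] by simp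
qed

lemma M_lower: assumes "\<not> shd (winf x)"
  shows "lex_le (False ## gen_app M (winf x)) (winf (gen_app M x))"
proof (rule winf_glb)
  fix n
  define c where "c = winf x"
  have Mc: "gen_app M c = False ## True ## gen_app M (stl c)"
    using assms M_Stream2[of c] unfolding c_def by simp
  obtain k j where kj: "j < length (img M (x !! k))"
    "sdrop n (gen_app M x) = drop j (img M (x !! k)) @- gen_app M (sdrop (Suc k) x)"
    using suffix_form by blast
  show "lex_le (False ## gen_app M (winf x)) (sdrop n (gen_app M x))"
  proof (cases "j = 0")
    case True
    then have "sdrop n (gen_app M x) = gen_app M (sdrop k x)" using kj suffix_j0 by simp
    moreover have "lex_le (gen_app M c) (gen_app M (sdrop k x))"
      using gen_mono_le[OF winf_lb[of x k]] unfolding c_def .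
    moreover have "lex_le (False ## gen_app M c) (gen_app M c)"
      by (subst (2) Mc) (subst Mc, simp add: le_Stream)
    ultimately show ?thesis unfolding c_def using le_trans by metis
  next
    case False
    then have j1: "j = 1" using kj(1) by (cases "x !! k"; simp)
    show ?thesis
    proof (cases "x !! k")
      case True
      then have e: "sdrop n (gen_app M x) = False ## gen_app M (sdrop (Suc k) x)" using kj j1 by simp
      show ?thesis unfolding e le_Stream using gen_mono_le[OF winf_lb[of x "Suc k"]] by simp
    next
      case False
      then have e: "sdrop n (gen_app M x) = True ## gen_app M (sdrop (Suc k) x)" using kj j1 by simp
      show ?thesis unfolding e le_Stream by simp
    qed
  qed
qed

lemma M_upper: assumes "shd (wsup y)"
  shows "lex_le (wsup (gen_app M y)) (True ## gen_app M (wsup y))"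
proof (rule wsup_lub)
  fix n
  define d where "d = wsup y"
  have Md: "gen_app M d = True ## False ## gen_app M (stl d)"
    using assms M_Stream2[of d] unfolding d_def by simp
  obtain k j where kj: "j < length (img M (y !! k))"
    "sdrop n (gen_app M y) = drop j (img M (y !! k)) @- gen_app M (sdrop (Suc k) y)"
    using suffix_form by blast
  show "lex_le (sdrop n (gen_app M y)) (True ## gen_app M (wsup y))"
  proof (cases "j = 0")
    case True
    then have "sdrop n (gen_app M y) = gen_app M (sdrop k y)" using kj suffix_j0 by simp
    moreover have "lex_le (gen_app M (sdrop k y)) (gen_app M d)"
      using gen_mono_le[OF wsup_ub[of k y]] unfolding d_def .
    moreover have "lex_le (gen_app M d) (True ## gen_app M d)"
      by (subst (2) Md) (subst Md, simp add: le_Stream)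
    ultimately show ?thesis unfolding d_def using le_trans by metis
  next
    case False
    then have j1: "j = 1" using kj(1) by (cases "y !! k"; simp)
    show ?thesis
    proof (cases "y !! k")
      case False
      then have e: "sdrop n (gen_app M y) = True ## gen_app M (sdrop (Suc k) y)" using kj j1 by simp
      show ?thesis unfolding e le_Stream using gen_mono_le[OF wsup_ub[of "Suc k" y]] by simp
    next
      case True
      then have e: "sdrop n (gen_app M y) = False ## gen_app M (sdrop (Suc k) y)" using kj j1 by simp
      show ?thesis unfolding e le_Stream by simp
    qed
  qed
qed

lemma snth_Stream2: "s = s !! 0 ## s !! Suc 0 ## sdrop 2 s"
  using sdrop_Suc_Stream2[of 0 s] by (simp add: numeral_2_eq_2)

lemma PF: "(\<forall>l<2*m. s !! l = odd l) \<Longrightarrow> \<not> s !! (2*m) \<Longrightarrow> \<not> s !! Suc (2*m) \<Longrightarrow> lex_less s (gen_app M c)"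
proof (induction m arbitrary: s c)
  case 0
  then have es: "s = False ## False ## sdrop 2 s" using snth_Stream2[of s] by simp
  show ?case by (subst es, subst M_Stream2) (cases "shd c"; simp add: lt_Stream)
next
  case (Suc m)
  have s0: "\<not> s !! 0" "s !! Suc 0" using Suc.prems(1) by auto
  have es: "s = False ## True ## sdrop 2 s" using snth_Stream2[of s] s0 by simp
  show ?case
  proof (cases "shd c")
    case True
    then show ?thesis by (subst es, subst M_Stream2) (simp add: lt_Stream)
  next
    case False
    have "lex_less (sdrop 2 s) (gen_app M (stl c))"
    proof (rule Suc.IH)
      show "\<forall>l<2 * m. sdrop 2 s !! l = odd l"
      proof (intro allI impI)
        fix l assume "l < 2 * m"
        then have "s !! (2 + l) = odd (2 + l)" by (intro Suc.prems(1)[rule_format]) simp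
        then show "sdrop 2 s !! l = odd l" by (simp only: sdrop_snth) simp
      qed
      have e: "2 + 2 * m = 2 * Suc m" by simp
      show "\<not> sdrop 2 s !! (2 * m)" using Suc.prems(2) by (simp only: sdrop_snth e not_False_eq_True)
      have e2: "2 + Suc (2 * m) = Suc (2 * Suc m)" by simp
      show "\<not> sdrop 2 s !! Suc (2 * m)" using Suc.prems(3) by (simp only: sdrop_snth e2 not_False_eq_True)
    qed
    then show ?thesis using False by (subst es, subst M_Stream2) (simp add: lt_Stream)
  qed
qed

lemma PT: "(\<forall>l<2*m. s !! l = even l) \<Longrightarrow> s !! (2*m) \<Longrightarrow> s !! Suc (2*m) \<Longrightarrow> lex_less (gen_app M c) s"
proof (induction m arbitrary: s c)
  case 0
  then have es: "s = True ## True ## sdrop 2 s" using snth_Stream2[of s] by simp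
  show ?case by (subst es, subst M_Stream2) (cases "shd c"; simp add: lt_Stream)
next
  case (Suc m)
  have s0: "s !! 0" "\<not> s !! Suc 0" using Suc.prems(1) by auto
  have es: "s = True ## False ## sdrop 2 s" using snth_Stream2[of s] s0 by simp
  show ?case
  proof (cases "shd c")
    case False
    then show ?thesis by (subst es, subst M_Stream2) (simp add: lt_Stream)
  next
    case True
    have "lex_less (gen_app M (stl c)) (sdrop 2 s)"
    proof (rule Suc.IH)
      show "\<forall>l<2 * m. sdrop 2 s !! l = even l"
      proof (intro allI impI)
        fix l assume "l < 2 * m"
        then have "s !! (2 + l) = even (2 + l)" by (intro Suc.prems(1)[rule_format]) simp
        then show "sdrop 2 s !! l = even l" by (simp only: sdrop_snth) simp
      qed
      have e: "2 + 2 * m = 2 * Suc m" by simp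
      show "sdrop 2 s !! (2 * m)" using Suc.prems(2) by (simp only: sdrop_snth e not_False_eq_True)
      have e2: "2 + Suc (2 * m) = Suc (2 * Suc m)" by simp
      show "sdrop 2 s !! Suc (2 * m)" using Suc.prems(3) by (simp only: sdrop_snth e2 not_False_eq_True)
    qed
    then show ?thesis using True by (subst es, subst M_Stream2) (simp add: lt_Stream)
  qed
qed


declare snth.simps(2)[simp del]

lemma M_alt:
  assumes lo: "\<And>q. lex_le (False ## gen_app M c) (sdrop q t)"
    and up: "\<And>q. lex_le (sdrop q t) (True ## gen_app M d)"
    and t01: "t !! 0 = t !! Suc 0"
  shows "t !! Suc (2*i) \<noteq> t !! Suc (Suc (2*i))"
proof -
  define Inv where "Inv i \<longleftrightarrow> (\<exists>j x. j \<le> i \<and> t !! (2*j) = x \<and>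
      (\<forall>l. 2*j < l \<and> l \<le> Suc (2*i) \<longrightarrow> t !! l = (if odd l then x else \<not> x)))" for i
  have key: "t !! Suc (Suc (2*i)) \<noteq> t !! Suc (2*i)" if "Inv i" for i
  proof
    assume eq: "t !! Suc (Suc (2*i)) = t !! Suc (2*i)"
    obtain j x where jx: "j \<le> i" "t !! (2*j) = x"
      "\<forall>l. 2*j < l \<and> l \<le> Suc (2*i) \<longrightarrow> t !! l = (if odd l then x else \<not> x)"
      using \<open>Inv i\<close> unfolding Inv_def by blast
    have hx: "t !! Suc (2*i) = x" using jx(3)[rule_format, of "Suc (2*i)"] jx(1) by simp
    define s where "s = sdrop (Suc (2*j)) t"
    define m where "m = i - j"
    have sl: "s !! l = (if odd (Suc (2*j) + l) then x else \<not> x)" if "l < 2*m" for l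
    proof -
      have "s !! l = t !! (Suc (2*j) + l)" unfolding s_def by (rule sdrop_snth)
      also have "\<dots> = (if odd (Suc (2*j) + l) then x else \<not> x)"
        using jx(3)[rule_format, of "Suc (2*j) + l"] that unfolding m_def by simp
      finally show ?thesis .
    qed
    have e1: "Suc (2*j) + 2*m = Suc (2*i)" unfolding m_def using jx(1) by simp
    have e2: "Suc (2*j) + Suc (2*m) = Suc (Suc (2*i))" unfolding m_def using jx(1) by simp
    have s2m: "s !! (2*m) = x" unfolding s_def sdrop_snth e1 by (rule hx)
    have s2m1: "s !! Suc (2*m) = x" unfolding s_def sdrop_snth e2 using eq hx by simp
    have tj: "sdrop (2*j) t = x ## s" unfolding s_def using sdrop_Suc_Stream[of "2*j" t] jx(2) by simp
    show False
    proof (cases x)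
      case False
      have "lex_less s (gen_app M c)"
      proof (rule PF)
        show "\<forall>l<2 * m. s !! l = odd l" using sl False by simp
      qed (use s2m s2m1 False in auto)
      then have "lex_less (False ## s) (False ## gen_app M c)" by (simp add: lt_Stream)
      then have "lex_less (False ## s) (sdrop (2*j) t)" by (rule lt_le_trans[OF _ lo])
      then show False using tj False lt_irrefl by simp
    next
      case True
      have "lex_less (gen_app M d) s"
      proof (rule PT)
        show "\<forall>l<2 * m. s !! l = even l" using sl True by simp
      qed (use s2m s2m1 True in auto)
      then have "lex_less (True ## gen_app M d) (True ## s)" by (simp add: lt_Stream)
      then have "lex_less (sdrop (2*j) t) (True ## s)" by (rule le_lt_trans[OF up])
      then show False using tj True lt_irrefl by simp
    qed
  qed
  have "Inv i" for i
  proof (induction i)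
    case 0
    show ?case unfolding Inv_def
    proof (intro exI[of _ 0] exI[of _ "t !! 0"] conjI allI impI)
      fix l assume "2 * 0 < l \<and> l \<le> Suc (2 * 0)"
      then have "l = Suc 0" by simp
      then show "t !! l = (if odd l then t !! 0 else \<not> t !! 0)" using t01 by simp
    qed simp_all
  next
    case (Suc i)
    have nk: "t !! Suc (Suc (2*i)) \<noteq> t !! Suc (2*i)" by (rule key[OF Suc])
    obtain j x where jx: "j \<le> i" "t !! (2*j) = x"
      "\<forall>l. 2*j < l \<and> l \<le> Suc (2*i) \<longrightarrow> t !! l = (if odd l then x else \<not> x)"
      using Suc unfolding Inv_def by blast
    have hx: "t !! Suc (2*i) = x" using jx(3)[rule_format, of "Suc (2*i)"] jx(1) by simp
    have h2: "t !! Suc (Suc (2*i)) = (\<not> x)" using nk hx by auto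
    show ?case
    proof (cases "t !! Suc (Suc (Suc (2*i))) = x")
      case True
      show ?thesis unfolding Inv_def
      proof (intro exI[of _ j] exI[of _ x] conjI allI impI)
        fix l assume l: "2 * j < l \<and> l \<le> Suc (2 * Suc i)"
        have l3: "l \<le> Suc (Suc (Suc (2*i)))" using l by simp
        consider "l \<le> Suc (2*i)" | "l = Suc (Suc (2*i))" | "l = Suc (Suc (Suc (2*i)))" using l3 by linarith
        then show "t !! l = (if odd l then x else \<not> x)"
        proof cases
          case 1 then show ?thesis using jx(3) l by blast
        next
          case 2 then show ?thesis using h2 by simp
        next
          case 3 then show ?thesis using True by simp
        qed
      qed (use jx in auto)
    next
      case False
      show ?thesis unfolding Inv_def
      proof (intro exI[of _ "Suc i"] exI[of _ "\<not> x"] conjI allI impI)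
        show "t !! (2 * Suc i) = (\<not> x)" using h2 by simp
        fix l assume l: "2 * Suc i < l \<and> l \<le> Suc (2 * Suc i)"
        then have "l = Suc (Suc (Suc (2*i)))" by simp
        then show "t !! l = (if odd l then \<not> x else \<not> \<not> x)" using False by simp
      qed simp
    qed
  qed
  then have "t !! Suc (Suc (2*i)) \<noteq> t !! Suc (2*i)" using key by blast
  then show ?thesis by (rule not_sym)
qed

lemma even_odd_cases: obtains i where "n = 2*i" | i where "n = Suc (2*i)"
proof (cases "even n")
  case True then show ?thesis using that(1)[of "n div 2"] by simp
next
  case False
  then have "n = Suc (2 * (n div 2))" by presburger
  then show ?thesis using that(2) by blast
qed

lemma M_struct:
  assumes alt: "\<And>i. t !! Suc (2*i) \<noteq> t !! Suc (Suc (2*i))"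
  shows "sdrop (Suc 0) t = gen_app M (smap (\<lambda>i. t !! Suc (2*i)) nats)"
proof (rule stream_eqI)
  fix n
  define w where "w = smap (\<lambda>i. t !! Suc (2*i)) nats"
  have "sdrop (Suc 0) t !! n = gen_app M w !! n"
  proof (cases n rule: even_odd_cases)
    case (1 i)
    then show ?thesis using M_snth[of w i] by (simp add: sdrop_snth w_def snth.simps(2))
  next
    case (2 i)
    then show ?thesis using M_snth[of w i] alt[of i] by (simp add: sdrop_snth w_def snth.simps(2))
  qed
  then show "sdrop (Suc 0) t !! n = gen_app M (smap (\<lambda>i. t !! Suc (2*i)) nats) !! n"
    unfolding w_def .
qed

lemma M_nodouble:
  assumes nd: "\<And>p. u !! p \<noteq> u !! Suc p"
  shows "\<exists>m. sdrop m u = gen_app M (sconst False)"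
proof -
  define m where "m = (if shd u then Suc 0 else 0)"
  have ul: "u !! (m + l) = odd l" for l
  proof (induction l)
    case 0
    show ?case
    proof (cases "shd u")
      case True then show ?thesis using nd[of 0] by (simp add: m_def)
    next
      case False then show ?thesis by (simp add: m_def)
    qed
  next
    case (Suc l)
    have "u !! (m + Suc l) = (\<not> u !! (m + l))" using nd[of "m + l"] by (cases "u !! (m + l)") auto
    then show ?case using Suc by simp
  qed
  have "sdrop m u = gen_app M (sconst False)"
  proof (rule stream_eqI)
    fix n
    show "sdrop m u !! n = gen_app M (sconst False) !! n"
    proof (cases n rule: even_odd_cases)
      case (1 i)
      then show ?thesis using M_snth[of "sconst False" i] ul[of n] by (simp add: sdrop_snth)
    next
      case (2 i)
      then show ?thesis using M_snth[of "sconst False" i] ul[of n] by (simp add: sdrop_snth)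
    qed
  qed
  then show ?thesis by blast
qed


lemma step_M:
  assumes F: "False \<in> sset x" and T: "True \<in> sset y"
    and H: "\<forall>k. lex_le (winf (gen_app M x)) (sdrop k u) \<and> lex_le (sdrop k u) (wsup (gen_app M y))"
  shows "(\<exists>m w. sdrop m u = gen_app M w \<and> (\<forall>k. lex_le (winf x) (sdrop k w) \<and> lex_le (sdrop k w) (wsup y)))
     \<or> (\<exists>m. sdrop m u = gen_app M (sconst False))"
proof (cases "\<exists>p. u !! p = u !! Suc p")
  case False
  then have "\<And>p. u !! p \<noteq> u !! Suc p" by blast
  then show ?thesis using M_nodouble by blast
next
  case True
  define c where "c = winf x"
  define d where "d = wsup y"
  have hd: "shd d" unfolding d_def by (rule shd_d[OF T])
  have hc: "\<not> shd c" unfolding c_def by (rule shd_c[OF F])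
  have up: "lex_le (sdrop k u) (True ## gen_app M d)" for k
    using le_trans[OF conjunct2[OF H[rule_format, of k]] M_upper[OF shd_d[OF T]]] unfolding d_def .
  have lo: "lex_le (False ## gen_app M c) (sdrop k u)" for k
    using le_trans[OF M_lower[OF shd_c[OF F]] conjunct1[OF H[rule_format, of k]]] unfolding c_def .
  obtain p where p: "u !! p = u !! Suc p" using True by blast
  define t where "t = sdrop p u"
  have alt: "t !! Suc (2*i) \<noteq> t !! Suc (Suc (2*i))" for i
  proof (rule M_alt[of c t d])
    show "lex_le (False ## gen_app M c) (sdrop q t)" for q unfolding t_def sdrop_add by (rule lo)
    show "lex_le (sdrop q t) (True ## gen_app M d)" for q unfolding t_def sdrop_add by (rule up)
    show "t !! 0 = t !! Suc 0" unfolding t_def sdrop_snth using p by simp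
  qed
  define w where "w = smap (\<lambda>i. t !! Suc (2*i)) nats"
  have uw: "sdrop (Suc p) u = gen_app M w"
    using M_struct[OF alt] unfolding w_def t_def sdrop_add by simp
  have w0: "w !! 0 = u !! p"
  proof -
    have "gen_app M w !! 0 = w !! 0" using M_snth[of w 0] by simp
    moreover have "gen_app M w !! 0 = u !! Suc p" unfolding uw[symmetric] sdrop_snth by simp
    ultimately show ?thesis using p by simp
  qed
  have pre: "sdrop (p + 2*k) u = u !! (p + 2*k) ## gen_app M (sdrop k w)" for k
  proof -
    have "sdrop (Suc (p + 2*k)) u = sdrop (2*k) (sdrop (Suc p) u)" by (simp add: sdrop_add)
    also have "\<dots> = gen_app M (sdrop k w)" unfolding uw by (rule M_sdrop2)
    finally show ?thesis using sdrop_Suc_Stream[of "p + 2*k" u] by simp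
  qed
  have letter: "u !! (p + 2 * Suc k) = (\<not> w !! k)" for k
  proof -
    have "u !! (p + 2 * Suc k) = sdrop (Suc p) u !! Suc (2*k)" unfolding sdrop_snth by simp
    also have "\<dots> = (\<not> w !! k)" unfolding uw using M_snth[of w k] by simp
    finally show ?thesis .
  qed
  have lower: "\<not> lex_less (sdrop k w) c" for k
  proof (induction k)
    case 0
    show ?case
    proof
      assume lt: "lex_less (sdrop 0 w) c"
      then have "\<not> shd w" using lt_shd hc by simp
      then have "\<not> u !! p" using w0 by simp
      then have e: "sdrop p u = False ## gen_app M w" using pre[of 0] by simp
      have "lex_less (False ## gen_app M w) (False ## gen_app M c)"
        using gen_mono_lt[OF lt] by (simp add: lt_Stream)
      then have "lex_less (sdrop p u) (sdrop p u)" using e lt_le_trans[OF _ lo[of p]] by simp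
      then show False using lt_irrefl by blast
    qed
  next
    case (Suc k)
    show ?case
    proof
      assume lt: "lex_less (sdrop (Suc k) w) c"
      show False
      proof (cases "u !! (p + 2 * Suc k)")
        case False
        then have e: "sdrop (p + 2 * Suc k) u = False ## gen_app M (sdrop (Suc k) w)" using pre[of "Suc k"] by simp
        have "lex_less (False ## gen_app M (sdrop (Suc k) w)) (False ## gen_app M c)"
          using gen_mono_lt[OF lt] by (simp add: lt_Stream)
        then have "lex_less (sdrop (p + 2 * Suc k) u) (sdrop (p + 2 * Suc k) u)"
          using e lt_le_trans[OF _ lo[of "p + 2 * Suc k"]] by simp
        then show False using lt_irrefl by blast
      next
        case True
        then have wk: "\<not> w !! k" using letter[of k] by simp
        have ek: "sdrop k w = False ## sdrop (Suc k) w" using sdrop_Suc_Stream[of k w] wk by simp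
        have "lex_less (sdrop (Suc k) w) (stl c)" using lt_le_trans[OF lt tail_ge[OF hc]] .
        then have "lex_less (False ## sdrop (Suc k) w) (False ## stl c)" by (simp add: lt_Stream)
        moreover have "False ## stl c = c" using hc by (metis stream.collapse)
        ultimately have "lex_less (sdrop k w) c" using ek by simp
        then show False using Suc by blast
      qed
    qed
  qed
  have upper: "\<not> lex_less d (sdrop k w)" for k
  proof (induction k)
    case 0
    show ?case
    proof
      assume lt: "lex_less d (sdrop 0 w)"
      then have "shd w" using lt_shd2 hd by simp
      then have "u !! p" using w0 by simp
      then have e: "sdrop p u = True ## gen_app M w" using pre[of 0] by simp
      have "lex_less (True ## gen_app M d) (True ## gen_app M w)"
        using gen_mono_lt[OF lt] by (simp add: lt_Stream)
      then have "lex_less (sdrop p u) (sdrop p u)" using e le_lt_trans[OF up[of p]] by simp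
      then show False using lt_irrefl by blast
    qed
  next
    case (Suc k)
    show ?case
    proof
      assume lt: "lex_less d (sdrop (Suc k) w)"
      show False
      proof (cases "u !! (p + 2 * Suc k)")
        case True
        then have e: "sdrop (p + 2 * Suc k) u = True ## gen_app M (sdrop (Suc k) w)" using pre[of "Suc k"] by simp
        have "lex_less (True ## gen_app M d) (True ## gen_app M (sdrop (Suc k) w))"
          using gen_mono_lt[OF lt] by (simp add: lt_Stream)
        then have "lex_less (sdrop (p + 2 * Suc k) u) (sdrop (p + 2 * Suc k) u)"
          using e le_lt_trans[OF up[of "p + 2 * Suc k"]] by simp
        then show False using lt_irrefl by blast
      next
        case False
        then have wk: "w !! k" using letter[of k] by simp
        have ek: "sdrop k w = True ## sdrop (Suc k) w" using sdrop_Suc_Stream[of k w] wk by simp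
        have "lex_less (stl d) (sdrop (Suc k) w)" using le_lt_trans[OF tail_le[OF hd] lt] .
        then have "lex_less (True ## stl d) (True ## sdrop (Suc k) w)" by (simp add: lt_Stream)
        moreover have "True ## stl d = d" using hd by (metis stream.collapse)
        ultimately have "lex_less d (sdrop k w)" using ek by simp
        then show False using Suc by blast
      qed
    qed
  qed
  have "lex_le c (sdrop k w) \<and> lex_le (sdrop k w) d" for k
    using lower[of k] upper[of k] by (simp add: not_le[symmetric])
  then show ?thesis using uw unfolding c_def d_def by blast
qed


definition concl :: "gen list \<Rightarrow> word \<Rightarrow> bool" where
  "concl \<sigma> u \<longleftrightarrow> (\<exists>k v. sdrop k u = subst_app \<sigma> v)
    \<or> (\<exists>k \<rho> \<tau>. \<sigma> = (\<rho> @ [M]) @ \<tau> \<and> sdrop k u = subst_app (\<rho> @ [M]) (sconst False))"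

lemma lift:
  assumes uw: "sdrop m u = gen_app g w" and c: "concl \<sigma> w"
  shows "concl (g # \<sigma>) u"
proof -
  have suf: "\<exists>m'. sdrop m' u = gen_app g (sdrop k w)" for k
  proof -
    obtain m' where "sdrop m' (gen_app g w) = gen_app g (sdrop k w)" using gen_app_sdrop_ex by blast
    then have "sdrop (m + m') u = gen_app g (sdrop k w)" using uw by (metis sdrop_add)
    then show ?thesis by blast
  qed
  from c show ?thesis unfolding concl_def
  proof (elim disjE exE conjE)
    fix k v assume "sdrop k w = subst_app \<sigma> v"
    then obtain m' where "sdrop m' u = subst_app (g # \<sigma>) v"
      using suf[of k] by (auto simp: subst_app_Cons)
    then show "(\<exists>k v. sdrop k u = subst_app (g # \<sigma>) v) \<or>
      (\<exists>k \<rho> \<tau>. g # \<sigma> = (\<rho> @ [M]) @ \<tau> \<and> sdrop k u = subst_app (\<rho> @ [M]) (sconst False))" by blast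
  next
    fix k \<rho> \<tau> assume h: "\<sigma> = (\<rho> @ [M]) @ \<tau>" "sdrop k w = subst_app (\<rho> @ [M]) (sconst False)"
    then obtain m' where "sdrop m' u = subst_app ((g # \<rho>) @ [M]) (sconst False)"
      using suf[of k] by (auto simp: subst_app_Cons)
    moreover have "g # \<sigma> = ((g # \<rho>) @ [M]) @ \<tau>" using h by simp
    ultimately show "(\<exists>k v. sdrop k u = subst_app (g # \<sigma>) v) \<or>
      (\<exists>k \<rho> \<tau>. g # \<sigma> = (\<rho> @ [M]) @ \<tau> \<and> sdrop k u = subst_app (\<rho> @ [M]) (sconst False))" by blast
  qed
qed

lemma main:
  "\<forall>u. (\<forall>k. lex_le (winf (subst_app \<sigma> (True ## sconst False))) (sdrop k u)
      \<and> lex_le (sdrop k u) (wsup (subst_app \<sigma> (False ## sconst True)))) \<longrightarrow> concl \<sigma> u"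
proof (induction \<sigma>)
  case Nil
  show ?case unfolding concl_def by (auto simp: subst_app_Nil intro: exI[of _ 0])
next
  case (Cons g \<sigma>)
  show ?case
  proof (intro allI impI)
    fix u
    define x where "x = subst_app \<sigma> (True ## sconst False)"
    define y where "y = subst_app \<sigma> (False ## sconst True)"
    assume "\<forall>k. lex_le (winf (subst_app (g # \<sigma>) (True ## sconst False))) (sdrop k u)
      \<and> lex_le (sdrop k u) (wsup (subst_app (g # \<sigma>) (False ## sconst True)))"
    then have H: "\<forall>k. lex_le (winf (gen_app g x)) (sdrop k u) \<and> lex_le (sdrop k u) (wsup (gen_app g y))"
      unfolding x_def y_def subst_app_Cons .
    have F: "False \<in> sset x" unfolding x_def by (rule sset_subst) simp
    have T: "True \<in> sset y" unfolding y_def by (rule sset_subst) simp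
    have IH: "concl \<sigma> w" if "\<forall>k. lex_le (winf x) (sdrop k w) \<and> lex_le (sdrop k w) (wsup y)" for w
      using Cons that unfolding x_def y_def by blast
    show "concl (g # \<sigma>) u"
    proof (cases g)
      case L
      then obtain m w where "sdrop m u = gen_app L w" "\<forall>k. lex_le (winf x) (sdrop k w) \<and> lex_le (sdrop k w) (wsup y)"
        using step_L[OF F T] H by blast
      then show ?thesis using lift IH L by blast
    next
      case R
      then obtain m w where "sdrop m u = gen_app R w" "\<forall>k. lex_le (winf x) (sdrop k w) \<and> lex_le (sdrop k w) (wsup y)"
        using step_R[OF F T] H by blast
      then show ?thesis using lift IH R by blast
    next
      case M
      have HM: "\<forall>k. lex_le (winf (gen_app M x)) (sdrop k u) \<and> lex_le (sdrop k u) (wsup (gen_app M y))"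
        using H M by simp
      from step_M[OF F T HM]
      show ?thesis
      proof (elim disjE exE conjE)
        fix m w assume "sdrop m u = gen_app M w" "\<forall>k. lex_le (winf x) (sdrop k w) \<and> lex_le (sdrop k w) (wsup y)"
        then show ?thesis using lift IH M by blast
      next
        fix m assume "sdrop m u = gen_app M (sconst False)"
        then have "sdrop m u = subst_app ([] @ [M]) (sconst False)" by (simp add: subst_app_Cons subst_app_Nil)
        moreover have "g # \<sigma> = ([] @ [M]) @ \<sigma>" using M by simp
        ultimately show ?thesis unfolding concl_def by blast
      qed
    qed
  qed
qed

theorem lemma2p6:
  fixes u :: word and \<sigma> :: "gen list"
  assumes "lex_le (winf (subst_app \<sigma> (True ## sconst False))) (winf u)"
    and "lex_le (wsup u) (wsup (subst_app \<sigma> (False ## sconst True)))"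
  shows "(\<exists>k v. sdrop k u = subst_app \<sigma> v)
    \<or> (\<exists>k \<rho> \<tau>. \<sigma> = (\<rho> @ [M]) @ \<tau> \<and> sdrop k u = subst_app (\<rho> @ [M]) (sconst False))"
proof -
  have "\<forall>k. lex_le (winf (subst_app \<sigma> (True ## sconst False))) (sdrop k u)
      \<and> lex_le (sdrop k u) (wsup (subst_app \<sigma> (False ## sconst True)))"
    using le_trans[OF assms(1) winf_lb] le_trans[OF wsup_ub assms(2)] by blast
  then have "concl \<sigma> u" using main by blast
  then show ?thesis unfolding concl_def .
qed

end
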